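(* Let $k$ be a fixed complex number. For every integer $n>0$, $$(\Lambda_{\Omega}\ast\beta_k)(n)=\Omega(n)\beta_k(n)-\beta_k(n).$$
   Context: $\Omega(n)=\sum_{p^\alpha\parallel n}\alpha$ is the number of prime factors of $n$ counted with multiplicity. $\Lambda_\Omega(n)=1$ if $n=p^k$ for some prime $p$ and integer $k\geq1$, and $\Lambda_\Omega(n)=0$ otherwise. $\beta_k(n)=\sum_{p\mid n}p^k$ is the sum of the $k$-th powers of the distinct prime factors of $n$. $\ast$ is Dirichlet convolution $(F\ast G)(n)=\sum_{d\mid n}F(d)G(n/d)$. *)

theory Defs
  imports "HOL-Analysis.Analysis" "HOL-Computational_Algebra.Primes"
begin

definition bigOmega :: "nat \<Rightarrow> nat" where
  "bigOmega n = size (prime_factorization n)"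

definition LambdaOmega :: "nat \<Rightarrow> complex" where
  "LambdaOmega n = (if \<exists>p j. prime p \<and> j \<ge> 1 \<and> n = p ^ j then 1 else 0)"

definition beta :: "complex \<Rightarrow> nat \<Rightarrow> complex" where
  "beta k n = (\<Sum>p\<in>prime_factors n. (of_nat p) powr k)"

definition dirichlet_conv :: "(nat \<Rightarrow> complex) \<Rightarrow> (nat \<Rightarrow> complex) \<Rightarrow> nat \<Rightarrow> complex" where
  "dirichlet_conv F G n = (\<Sum>d | d dvd n. F d * G (n div d))"

end

theory Submission
  imports Defs
begin

lemma size_pf: "size (prime_factorization (n::nat)) = (\<Sum>p\<in>prime_factors n. multiplicity p n)"
  by (simp add: size_multiset_overloaded_eq count_prime_factorization_prime in_prime_factors_imp_prime
      cong: sum.cong)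

lemma pf_div:
  fixes n p j :: nat
  assumes n: "n > 0" and p: "prime p" and j: "1 \<le> j" "j \<le> multiplicity p n"
  shows "prime_factors (n div p ^ j) = (if j = multiplicity p n then prime_factors n - {p} else prime_factors n)"
proof -
  have d: "p ^ j dvd n" using j(2) by (rule multiplicity_dvd')
  define m where "m = n div p ^ j"
  have nm: "n = p ^ j * m" unfolding m_def using d by (rule dvd_mult_div_cancel[symmetric])
  have pj0: "p ^ j \<noteq> 0" using p by (simp add: prime_gt_0_nat)
  have m0: "m \<noteq> 0" proof
    assume "m = 0" hence "n = 0" using nm by simp
    thus False using n by simp
  qed
  have "prime_factors n = prime_factors (p ^ j) \<union> prime_factors m"
    by (subst nm, rule prime_factors_product[OF pj0 m0])
  also have "prime_factors (p ^ j) = {p}" using p j by (simp add: prime_factorization_prime_power)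
  finally have pfn: "prime_factors n = {p} \<union> prime_factors m" .
  have "multiplicity p n = multiplicity p (p ^ j) + multiplicity p m"
    by (subst nm, rule prime_elem_multiplicity_mult_distrib[OF prime_imp_prime_elem[OF p] pj0 m0])
  also have "multiplicity p (p ^ j) = j" using p by (simp add: multiplicity_prime_power)
  finally have mm: "multiplicity p n = j + multiplicity p m" .
  have nu: "\<not> is_unit p" using prime_gt_1_nat[OF p] by simp
  have "p \<in> prime_factors m \<longleftrightarrow> p dvd m"
    using p m0 by (simp add: in_prime_factors_iff)
  also have "p dvd m \<longleftrightarrow> 1 \<le> multiplicity p m"
  proof
    assume "p dvd m" thus "1 \<le> multiplicity p m" using multiplicity_geI[OF m0 nu, of 1] by simp
  next
    assume "1 \<le> multiplicity p m" thus "p dvd m" using multiplicity_dvd'[of 1 p m] by simp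
  qed
  finally have e0: "p \<in> prime_factors m \<longleftrightarrow> 1 \<le> multiplicity p m" .
  have "1 \<le> multiplicity p m \<longleftrightarrow> j \<noteq> multiplicity p n" using mm by arith
  with e0 have e: "p \<in> prime_factors m \<longleftrightarrow> j \<noteq> multiplicity p n" by (rule trans)
  show ?thesis
  proof (cases "j = multiplicity p n")
    case True
    have "p \<notin> prime_factors m" using e True by (simp only: not_not simp_thms)
    hence "prime_factors n - {p} = prime_factors m" unfolding pfn by simp
    thus ?thesis unfolding m_def[symmetric] if_P[OF True] by (rule sym)
  next
    case False
    have "p \<in> prime_factors m" using e False by (simp only: simp_thms)
    hence "prime_factors n = prime_factors m" unfolding pfn by (simp add: insert_absorb)
    thus ?thesis unfolding m_def[symmetric] if_not_P[OF False] by (rule sym)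
  qed
qed

theorem theorem3p1:
  fixes k :: complex and n :: nat
  assumes "n > 0"
  shows "dirichlet_conv LambdaOmega (beta k) n = of_nat (bigOmega n) * beta k n - beta k n"
proof -
  define S where "S = (SIGMA p:prime_factors n. {1..multiplicity p n})"
  define g where "g = (\<lambda>(p::nat, j::nat). p ^ j)"
  have finS: "finite S" unfolding S_def by auto
  have fin: "finite {d. d dvd n}" using assms by simp
  have "dirichlet_conv LambdaOmega (beta k) n
      = (\<Sum>d\<in>{d. d dvd n \<and> (\<exists>p j. prime p \<and> j \<ge> 1 \<and> d = p ^ j)}. beta k (n div d))"
  proof -
    let ?P = "\<lambda>d::nat. \<exists>p j. prime p \<and> j \<ge> 1 \<and> d = p ^ j"
    have "dirichlet_conv LambdaOmega (beta k) n
        = (\<Sum>d | d dvd n. (if ?P d then 1 else 0) * beta k (n div d))"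
      by (simp only: dirichlet_conv_def LambdaOmega_def)
    also have "\<dots> = (\<Sum>d | d dvd n. if ?P d then beta k (n div d) else 0)"
      by (rule sum.cong) auto
    also have "\<dots> = (\<Sum>d\<in>{x\<in>{d. d dvd n}. ?P x}. beta k (n div d))"
      by (rule sum.inter_filter[OF fin, symmetric])
    also have "{x\<in>{d. d dvd n}. ?P x} = {d. d dvd n \<and> ?P d}" by auto
    finally show ?thesis .
  qed
  also have "{d. d dvd n \<and> (\<exists>p j. prime p \<and> j \<ge> 1 \<and> d = p ^ j)} = g ` S"
  proof (intro equalityI subsetI)
    fix d assume "d \<in> {d. d dvd n \<and> (\<exists>p j. prime p \<and> j \<ge> 1 \<and> d = p ^ j)}"
    then obtain p j where pj: "prime p" "j \<ge> 1" "d = p ^ j" "p ^ j dvd n" by auto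
    hence "j \<le> multiplicity p n" using assms by (intro multiplicity_geI) auto
    moreover have "p \<in> prime_factors n" using pj assms
    proof -
      have "p dvd p ^ j" using pj(2) by (intro dvd_power) auto
      hence "p dvd n" using pj(4) by (rule dvd_trans)
      thus ?thesis using pj(1) assms by (intro prime_factorsI) auto
    qed
    ultimately show "d \<in> g ` S" unfolding S_def g_def using pj by force
  next
    fix d assume "d \<in> g ` S"
    then obtain p j where "p \<in> prime_factors n" "1 \<le> j" "j \<le> multiplicity p n" "d = p ^ j"
      unfolding S_def g_def by auto
    thus "d \<in> {d. d dvd n \<and> (\<exists>p j. prime p \<and> j \<ge> 1 \<and> d = p ^ j)}"
      by (auto intro: multiplicity_dvd')
  qed
  also have "(\<Sum>d\<in>g ` S. beta k (n div d)) = (\<Sum>x\<in>S. beta k (n div g x))"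
  proof (rule sum.reindex[unfolded comp_def])
    show "inj_on g S" unfolding inj_on_def
    proof (intro ballI impI)
      fix x y assume xy: "x \<in> S" "y \<in> S" "g x = g y"
      obtain p j where x: "x = (p, j)" "prime p" "j \<ge> 1" using xy(1) unfolding S_def
        by (auto simp: in_prime_factors_imp_prime)
      obtain q i where y: "y = (q, i)" "prime q" "i \<ge> 1" using xy(2) unfolding S_def
        by (auto simp: in_prime_factors_imp_prime)
      have e: "p ^ j = q ^ i" using xy(3) x y unfolding g_def by simp
      have "p = q" "j = i" using prime_power_inj'[OF x(2) y(2) e] x(3) y(3) by auto
      thus "x = y" using x y by simp
    qed
  qed
  also have "\<dots> = (\<Sum>x\<in>S. beta k n - (if snd x = multiplicity (fst x) n then of_nat (fst x) powr k else 0))"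
  proof (rule sum.cong[OF refl])
    fix x assume "x \<in> S"
    then obtain p j where x: "x = (p, j)" "p \<in> prime_factors n" "1 \<le> j" "j \<le> multiplicity p n"
      unfolding S_def by auto
    have pr: "prime p" using x by (simp add: in_prime_factors_imp_prime)
    show "beta k (n div g x) = beta k n - (if snd x = multiplicity (fst x) n then of_nat (fst x) powr k else 0)"
      using x pf_div[OF assms pr x(3,4)] unfolding beta_def g_def
      by (auto simp: sum_diff1)
  qed
  also have "\<dots> = of_nat (card S) * beta k n - (\<Sum>x\<in>S. if snd x = multiplicity (fst x) n then of_nat (fst x) powr k else 0)"
    by (simp add: sum_subtractf)
  also have "card S = bigOmega n" unfolding S_def bigOmega_def size_pf
    by (subst card_SigmaI) auto
  also have "(\<Sum>x\<in>S. if snd x = multiplicity (fst x) n then of_nat (fst x) powr k else 0) = beta k n"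
  proof -
    have "(\<Sum>x\<in>S. if snd x = multiplicity (fst x) n then of_nat (fst x) powr k else 0)
        = (\<Sum>(p,j)\<in>S. if j = multiplicity p n then of_nat p powr k else (0::complex))"
      by (rule sum.cong) auto
    also have "\<dots> = (\<Sum>p\<in>prime_factors n. \<Sum>j\<in>{1..multiplicity p n}. if j = multiplicity p n then of_nat p powr k else 0)"
      unfolding S_def by (rule sum.Sigma[symmetric]) auto
    also have "\<dots> = (\<Sum>p\<in>prime_factors n. of_nat p powr k)"
    proof (rule sum.cong[OF refl])
      fix p assume "p \<in> prime_factors n"
      hence pp: "prime p" "p dvd n" by (auto simp: in_prime_factors_iff)
      have "multiplicity p n \<ge> 1"
        using multiplicity_geI[of n p 1] pp assms prime_gt_1_nat[OF pp(1)] by simp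
      hence "multiplicity p n \<in> {1..multiplicity p n}" by simp
      thus "(\<Sum>j\<in>{1..multiplicity p n}. if j = multiplicity p n then of_nat p powr k else 0) = of_nat p powr k"
        by (subst sum.delta[OF finite_atLeastAtMost]) (simp only: if_True)
    qed
    finally show ?thesis unfolding beta_def .
  qed
  finally show ?thesis .
qed

end
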